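(* Let $k\in\mathbb{Z}$, let $p$ be a positive integer and let $m$ be an odd positive integer. Then $$S_{p}^{(k)}(1,m)=\sum_{\nu=0}^{p}\binom{p}{\nu}E_{\nu}^{(k)}\sum_{i=0}^{p-\nu}\binom{p-\nu+1}{i}E_{i}m^{p-i},$$ where $S_p^{(k)}(1,m):=m^{p}T_{p}^{(k)}(1,m)-2\sum_{\nu=0}^{p}\binom{p}{\nu}E_{\nu}^{(k)}E_{p+1-\nu}m^{\nu-1}$.
   Context: Euler polynomials $E_n(x)$ are defined by $\frac{2}{e^t+1}e^{xt}=\sum_{n=0}^{\infty}E_n(x)\frac{t^n}{n!}$ and $E_n=E_n(0)$. For $k\in\mathbb{Z}$, $\mathrm{Ei}_k(x)=\sum_{n=1}^{\infty}\frac{x^n}{n^k(n-1)!}$; the poly-Genocchi polynomials $G_n^{(k)}(x)$ are defined by $\frac{2\,\mathrm{Ei}_k(\log(1+t))}{e^t+1}e^{xt}=\sum_{n=0}^{\infty}G_n^{(k)}(x)\frac{t^n}{n!}$; the poly-Euler polynomials are $E_n^{(k)}(x)=\frac{G_{n+1}^{(k)}(x)}{n+1}$ ($n\ge0$), $E_n^{(k)}=E_n^{(k)}(0)$, and the poly-Euler functions are $\overline{E}_n^{(k)}(x)=E_n^{(k)}(x-[x])$, where $[x]$ is the greatest integer $\le x$. For positive integers $h,m,p$, the poly-Dedekind type DC sum is $T_p^{(k)}(h,m)=2\sum_{\mu=1}^{m-1}(-1)^{\mu}\frac{\mu}{m}\overline{E}_p^{(k)}\big(\frac{h\mu}{m}\big)$.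 *)

theory Defs
  imports "HOL-Computational_Algebra.Formal_Power_Series"
begin

definition euler_poly :: "nat \<Rightarrow> real \<Rightarrow> real" where
  "euler_poly n x = fact n * fps_nth (fps_const 2 / (fps_exp 1 + 1) * fps_exp x) n"

definition Ei_fps :: "int \<Rightarrow> real fps" where
  "Ei_fps k = Abs_fps (\<lambda>n. if n = 0 then 0 else 1 / (real n powi k * fact (n - 1)))"

(* poly-Genocchi polynomials: 2 Ei_k(log(1+t))/(e^t+1) e^{xt} = sum G_n^(k)(x) t^n/n! ;
   fps_ln 1 is the power series of log(1+t) *)
definition poly_genocchi :: "int \<Rightarrow> nat \<Rightarrow> real \<Rightarrow> real" where
  "poly_genocchi k n x =
     fact n * fps_nth (fps_const 2 * (Ei_fps k oo fps_ln 1) / (fps_exp 1 + 1) * fps_exp x) n"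

definition poly_euler :: "int \<Rightarrow> nat \<Rightarrow> real \<Rightarrow> real" where
  "poly_euler k n x = poly_genocchi k (n + 1) x / real (n + 1)"

definition poly_euler_fun :: "int \<Rightarrow> nat \<Rightarrow> real \<Rightarrow> real" where
  "poly_euler_fun k n x = poly_euler k n (x - of_int \<lfloor>x\<rfloor>)"

definition poly_DC_sum :: "int \<Rightarrow> nat \<Rightarrow> nat \<Rightarrow> nat \<Rightarrow> real" where
  "poly_DC_sum k p h m =
     2 * (\<Sum>\<mu>=1..m-1. (-1) ^ \<mu> * (real \<mu> / real m) * poly_euler_fun k p (real h * real \<mu> / real m))"

end

theory Submission imports Defs begin
unbundle fps_syntax

lemma fact_exp_nth:
  fixes A :: "real fps"
  shows "fact n * (A * fps_exp x) $ n = (\<Sum>j=0..n. real (n choose j) * (fact j * A $ j) * x ^ (n - j))"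
proof -
  have "fact n * (A * fps_exp x) $ n = (\<Sum>j=0..n. fact n * (A $ j * (x ^ (n - j) / fact (n - j))))"
    by (simp add: fps_mult_nth sum_distrib_left)
  also have "\<dots> = (\<Sum>j=0..n. real (n choose j) * (fact j * A $ j) * x ^ (n - j))"
  proof (rule sum.cong)
    fix j assume "j \<in> {0..n}"
    then have "j \<le> n" by simp
    then have "real (n choose j) = fact n / (fact j * fact (n - j))" by (rule binomial_fact)
    then show "fact n * (A $ j * (x ^ (n - j) / fact (n - j))) = real (n choose j) * (fact j * A $ j) * x ^ (n - j)"
      by (simp add: field_simps)
  qed simp
  finally show ?thesis .
qed

lemma euler_poly_expand:
  "euler_poly n x = (\<Sum>i=0..n. real (n choose i) * euler_poly i 0 * x ^ (n - i))"
proof -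
  have e0: "euler_poly i 0 = fact i * (fps_const 2 / (fps_exp 1 + 1)) $ i" for i
    by (simp add: euler_poly_def)
  show ?thesis unfolding e0 unfolding euler_poly_def fact_exp_nth ..
qed

lemma euler_poly_shift:
  "euler_poly n (x + 1) + euler_poly n x = 2 * x ^ n"
proof -
  define B :: "real fps" where "B = fps_const 2 / (fps_exp 1 + 1)"
  have B: "B * (fps_exp 1 + 1) = fps_const 2"
  proof -
    have g0: "(fps_exp 1 + 1 :: real fps) $ 0 \<noteq> 0" by simp
    have "(fps_exp 1 + 1 :: real fps) \<noteq> 0" using g0 by (metis fps_zero_nth)
    moreover have "subdegree (fps_exp 1 + 1 :: real fps) = 0" using g0 by (simp add: subdegree_eq_0_iff)
    ultimately show ?thesis unfolding B_def by (intro fps_times_divide_eq) auto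
  qed
  have "B * fps_exp (x + 1) + B * fps_exp x = (B * (fps_exp 1 + 1)) * fps_exp x"
    by (simp add: fps_exp_add_mult algebra_simps)
  also have "\<dots> = fps_const 2 * fps_exp x" using B by simp
  finally have e: "B * fps_exp (x + 1) + B * fps_exp x = fps_const 2 * fps_exp x" .
  have "euler_poly n (x + 1) + euler_poly n x = fact n * (B * fps_exp (x + 1) + B * fps_exp x) $ n"
    unfolding euler_poly_def B_def by (simp add: algebra_simps)
  also have "\<dots> = 2 * x ^ n" unfolding e by simp
  finally show ?thesis .
qed

lemma alt_sum:
  "(\<Sum>\<mu><m. (-1) ^ \<mu> * (euler_poly n (real \<mu>) + euler_poly n (real \<mu> + 1)))
     = euler_poly n 0 + (-1) ^ (m + 1) * euler_poly n (real m)"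
  by (induction m) (auto simp: algebra_simps)

lemma alt_pow_sum:
  assumes "odd m"
  shows "2 * (\<Sum>\<mu><m. (-1) ^ \<mu> * real \<mu> ^ n) = euler_poly n 0 + euler_poly n (real m)"
proof -
  have "2 * (\<Sum>\<mu><m. (-1) ^ \<mu> * real \<mu> ^ n) = (\<Sum>\<mu><m. (-1) ^ \<mu> * (euler_poly n (real \<mu>) + euler_poly n (real \<mu> + 1)))"
    by (simp add: sum_distrib_left euler_poly_shift[of n, simplified add.commute] algebra_simps)
  also have "\<dots> = euler_poly n 0 + euler_poly n (real m)" using alt_sum[where m=m and n=n] assms by simp
  finally show ?thesis .
qed

lemma poly_euler_expand:
  "poly_euler k p x = (\<Sum>\<nu>=0..p. real (p choose \<nu>) * poly_euler k \<nu> 0 * x ^ (p - \<nu>))"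
proof -
  define A :: "real fps" where "A = fps_const 2 * (Ei_fps k oo fps_ln 1) / (fps_exp 1 + 1)"
  have A0: "A $ 0 = 0" unfolding A_def by (simp add: Ei_fps_def)
  have g: "poly_genocchi k n x = (\<Sum>j=0..n. real (n choose j) * (fact j * A $ j) * x ^ (n - j))" for n x
    unfolding poly_genocchi_def A_def[symmetric] fact_exp_nth ..
  have g0: "poly_genocchi k n 0 = fact n * A $ n" for n
    unfolding poly_genocchi_def A_def[symmetric] by simp
  have pe0: "poly_euler k j 0 = fact j * A $ Suc j" for j
  proof -
    have "poly_euler k j 0 = fact (Suc j) * A $ Suc j / real (Suc j)"
      unfolding poly_euler_def g0 by simp
    also have "\<dots> = fact j * A $ Suc j" unfolding fact_Suc by simp
    finally show ?thesis .
  qed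
  have "poly_euler k p x = (\<Sum>j=0..Suc p. real (Suc p choose j) * (fact j * A $ j) * x ^ (Suc p - j)) / real (Suc p)"
    unfolding poly_euler_def g by simp
  also have "\<dots> = (\<Sum>j=0..p. real (Suc p choose Suc j) * (fact (Suc j) * A $ Suc j) * x ^ (p - j)) / real (Suc p)"
    by (subst sum.atLeast0_atMost_Suc_shift) (simp add: A0)
  also have "\<dots> = (\<Sum>\<nu>=0..p. real (p choose \<nu>) * poly_euler k \<nu> 0 * x ^ (p - \<nu>))"
    unfolding sum_divide_distrib pe0
  proof (rule sum.cong)
    fix j assume "j \<in> {0..p}"
    have c: "real (Suc p choose Suc j) * real (Suc j) = real (Suc p) * real (p choose j)"
      using Suc_times_binomial_eq[of p j] by (metis of_nat_mult mult.commute)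
    have "real (Suc p choose Suc j) * (fact (Suc j) * A $ Suc j) * x ^ (p - j) / real (Suc p)
        = (real (Suc p choose Suc j) * real (Suc j)) * (fact j * A $ Suc j) * x ^ (p - j) / real (Suc p)"
      unfolding fact_Suc by (simp add: mult_ac)
    also have "\<dots> = real (p choose j) * (fact j * A $ Suc j) * x ^ (p - j)"
      unfolding c by simp
    finally show "real (Suc p choose Suc j) * (fact (Suc j) * A $ Suc j) * x ^ (p - j) / real (Suc p) =
         real (p choose j) * (fact j * A $ Suc j) * x ^ (p - j)" .
  qed simp
  finally show ?thesis .
qed


lemma pow_id:
  fixes M u :: real
  assumes "M > 0" "\<nu> \<le> p"
  shows "M ^ p * ((u / M) * (u / M) ^ (p - \<nu>)) = u ^ (p - \<nu> + 1) * M powi (int \<nu> - 1)"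
proof -
  have pw: "M powi (int \<nu> - 1) = M ^ \<nu> / M"
    using assms by (simp add: power_int_diff)
  have "M ^ p = M ^ (p - \<nu>) * M ^ \<nu>" using assms by (simp add: power_add[symmetric])
  then show ?thesis unfolding pw using assms by (simp add: field_simps power_divide)
qed

lemma pow_id2:
  fixes M :: real
  assumes "M > 0" "\<nu> \<le> p" "i \<le> p - \<nu>"
  shows "M powi (int \<nu> - 1) * M ^ (Suc (p - \<nu>) - i) = M ^ (p - i)"
proof -
  have pw: "M powi (int \<nu> - 1) = M ^ \<nu> / M"
    using assms by (simp add: power_int_diff)
  have "M ^ \<nu> * M ^ (Suc (p - \<nu>) - i) = M ^ (p - i) * M" using assms
    by (simp add: power_add[symmetric] Suc_diff_le)
  then show ?thesis unfolding pw using assms by (simp add: field_simps)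
qed

lemma range_sum:
  fixes f :: "nat \<Rightarrow> real"
  assumes "m > 0" "f 0 = 0"
  shows "(\<Sum>\<mu>=1..m-1. f \<mu>) = (\<Sum>\<mu><m. f \<mu>)"
proof -
  have "{..<m} = insert 0 {1..m-1}" using assms by auto
  then show ?thesis using assms by simp
qed

lemma DC_expand:
  assumes "m > 0"
  shows "real m ^ p * poly_DC_sum k p 1 m =
    (\<Sum>\<nu>=0..p. real (p choose \<nu>) * poly_euler k \<nu> 0 *
        (real m powi (int \<nu> - 1) * (2 * (\<Sum>\<mu><m. (-1) ^ \<mu> * real \<mu> ^ (p - \<nu> + 1)))))"
proof -
  let ?M = "real m"
  have M: "?M > 0" using assms by simp
  have fl: "poly_euler_fun k p (real 1 * real \<mu> / ?M) = poly_euler k p (real \<mu> / ?M)"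
    if "\<mu> \<in> {1..m-1}" for \<mu>
  proof -
    have "\<mu> < m" using that assms by auto
    then have "\<lfloor>real \<mu> / ?M\<rfloor> = 0" by (simp add: floor_divide_of_nat_eq)
    then show ?thesis unfolding poly_euler_fun_def by simp
  qed
  have "real m ^ p * poly_DC_sum k p 1 m =
     (\<Sum>\<mu>=1..m-1. \<Sum>\<nu>=0..p. real (p choose \<nu>) * poly_euler k \<nu> 0 *
        (real m powi (int \<nu> - 1) * (2 * ((-1) ^ \<mu> * real \<mu> ^ (p - \<nu> + 1)))))"
    unfolding poly_DC_sum_def sum_distrib_left
  proof (rule sum.cong[OF refl])
    fix \<mu> assume mu: "\<mu> \<in> {1..m-1}"
    show "?M ^ p * (2 * ((-1) ^ \<mu> * (real \<mu> / ?M) * poly_euler_fun k p (real 1 * real \<mu> / ?M))) =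
      (\<Sum>\<nu>=0..p. real (p choose \<nu>) * poly_euler k \<nu> 0 *
        (real m powi (int \<nu> - 1) * (2 * ((-1) ^ \<mu> * real \<mu> ^ (p - \<nu> + 1)))))"
      unfolding fl[OF mu] poly_euler_expand[of k p] sum_distrib_left
    proof (rule sum.cong[OF refl])
      fix \<nu> assume "\<nu> \<in> {0..p}"
      then have nu: "\<nu> \<le> p" by simp
      have e: "?M ^ p * ((real \<mu> / ?M) * (real \<mu> / ?M) ^ (p - \<nu>)) = real \<mu> ^ (p - \<nu> + 1) * ?M powi (int \<nu> - 1)"
        by (rule pow_id[OF M nu])
      show "?M ^ p * (2 * ((-1) ^ \<mu> * (real \<mu> / ?M) * (real (p choose \<nu>) * poly_euler k \<nu> 0 * (real \<mu> / ?M) ^ (p - \<nu>)))) =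
        real (p choose \<nu>) * poly_euler k \<nu> 0 * (?M powi (int \<nu> - 1) * (2 * ((-1) ^ \<mu> * real \<mu> ^ (p - \<nu> + 1))))"
      proof -
        have "?M ^ p * (2 * ((-1) ^ \<mu> * (real \<mu> / ?M) * (real (p choose \<nu>) * poly_euler k \<nu> 0 * (real \<mu> / ?M) ^ (p - \<nu>))))
          = (real (p choose \<nu>) * poly_euler k \<nu> 0 * 2 * (-1) ^ \<mu>) * (?M ^ p * ((real \<mu> / ?M) * (real \<mu> / ?M) ^ (p - \<nu>)))"
          by (simp only: mult_ac)
        also have "\<dots> = (real (p choose \<nu>) * poly_euler k \<nu> 0 * 2 * (-1) ^ \<mu>) * (real \<mu> ^ (p - \<nu> + 1) * ?M powi (int \<nu> - 1))"
          by (simp only: e)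
        also have "\<dots> = real (p choose \<nu>) * poly_euler k \<nu> 0 * (?M powi (int \<nu> - 1) * (2 * ((-1) ^ \<mu> * real \<mu> ^ (p - \<nu> + 1))))"
          by (simp only: mult_ac)
        finally show ?thesis .
      qed
    qed
  qed
  also have "\<dots> = (\<Sum>\<nu>=0..p. \<Sum>\<mu>=1..m-1. real (p choose \<nu>) * poly_euler k \<nu> 0 *
        (real m powi (int \<nu> - 1) * (2 * ((-1) ^ \<mu> * real \<mu> ^ (p - \<nu> + 1)))))"
    by (rule sum.swap)
  also have "\<dots> = (\<Sum>\<nu>=0..p. real (p choose \<nu>) * poly_euler k \<nu> 0 *
        (real m powi (int \<nu> - 1) * (2 * (\<Sum>\<mu><m. (-1) ^ \<mu> * real \<mu> ^ (p - \<nu> + 1)))))"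
  proof (rule sum.cong[OF refl])
    fix \<nu>
    show "(\<Sum>\<mu>=1..m-1. real (p choose \<nu>) * poly_euler k \<nu> 0 *
        (real m powi (int \<nu> - 1) * (2 * ((-1) ^ \<mu> * real \<mu> ^ (p - \<nu> + 1))))) =
        real (p choose \<nu>) * poly_euler k \<nu> 0 *
        (real m powi (int \<nu> - 1) * (2 * (\<Sum>\<mu><m. (-1) ^ \<mu> * real \<mu> ^ (p - \<nu> + 1))))"
      unfolding sum_distrib_left by (rule range_sum[OF assms]) simp
  qed
  finally show ?thesis .
qed

lemma X_expand:
  assumes "m > 0" "odd m" "\<nu> \<le> p"
  shows "real m powi (int \<nu> - 1) * (2 * (\<Sum>\<mu><m. (-1) ^ \<mu> * real \<mu> ^ (p - \<nu> + 1)))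
    = 2 * euler_poly (p + 1 - \<nu>) 0 * real m powi (int \<nu> - 1)
      + (\<Sum>i=0..p-\<nu>. real ((p - \<nu> + 1) choose i) * euler_poly i 0 * real m ^ (p - i))"
proof -
  let ?M = "real m" and ?n = "p - \<nu> + 1"
  have M: "?M > 0" using assms by simp
  have n: "p + 1 - \<nu> = Suc (p - \<nu>)" "?n = Suc (p - \<nu>)" using assms by auto
  have "2 * (\<Sum>\<mu><m. (-1) ^ \<mu> * real \<mu> ^ ?n) = euler_poly ?n 0 + euler_poly ?n ?M"
    by (rule alt_pow_sum[OF assms(2)])
  also have "euler_poly ?n ?M = (\<Sum>i=0..?n. real (?n choose i) * euler_poly i 0 * ?M ^ (?n - i))"
    by (rule euler_poly_expand)
  also have "\<dots> = (\<Sum>i=0..p-\<nu>. real (?n choose i) * euler_poly i 0 * ?M ^ (?n - i)) + euler_poly ?n 0"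
    unfolding n(2) by (simp add: sum.atLeast0_atMost_Suc)
  finally have "?M powi (int \<nu> - 1) * (2 * (\<Sum>\<mu><m. (-1) ^ \<mu> * real \<mu> ^ ?n)) =
     2 * euler_poly ?n 0 * ?M powi (int \<nu> - 1) + 
     (\<Sum>i=0..p-\<nu>. real (?n choose i) * euler_poly i 0 * (?M powi (int \<nu> - 1) * ?M ^ (?n - i)))"
    by (simp add: algebra_simps sum_distrib_left)
  also have "\<dots> = 2 * euler_poly ?n 0 * ?M powi (int \<nu> - 1) + 
     (\<Sum>i=0..p-\<nu>. real (?n choose i) * euler_poly i 0 * ?M ^ (p - i))"
    by (intro arg_cong2[where f="(+)"] refl sum.cong) (simp_all add: pow_id2[OF M assms(3)])
  finally show ?thesis using n by simp
qed

theorem theorem10: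
  fixes k :: int and p m :: nat
  assumes "p > 0" and "m > 0" and "odd m"
  shows "real m ^ p * poly_DC_sum k p 1 m
           - 2 * (\<Sum>\<nu>=0..p. real (p choose \<nu>) * poly_euler k \<nu> 0 * euler_poly (p + 1 - \<nu>) 0
                    * real m powi (int \<nu> - 1))
         = (\<Sum>\<nu>=0..p. real (p choose \<nu>) * poly_euler k \<nu> 0 *
              (\<Sum>i=0..p-\<nu>. real ((p - \<nu> + 1) choose i) * euler_poly i 0 * real m ^ (p - i)))"
proof -
  have "real m ^ p * poly_DC_sum k p 1 m =
    (\<Sum>\<nu>=0..p. real (p choose \<nu>) * poly_euler k \<nu> 0 *
       (2 * euler_poly (p + 1 - \<nu>) 0 * real m powi (int \<nu> - 1)
      + (\<Sum>i=0..p-\<nu>. real ((p - \<nu> + 1) choose i) * euler_poly i 0 * real m ^ (p - i))))"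
    unfolding DC_expand[OF assms(2)]
  proof (intro sum.cong refl)
    fix \<nu> assume "\<nu> \<in> {0..p}"
    then have nu: "\<nu> \<le> p" by simp
    show "real (p choose \<nu>) * poly_euler k \<nu> 0 *
        (real m powi (int \<nu> - 1) * (2 * (\<Sum>\<mu><m. (-1) ^ \<mu> * real \<mu> ^ (p - \<nu> + 1)))) =
      real (p choose \<nu>) * poly_euler k \<nu> 0 *
       (2 * euler_poly (p + 1 - \<nu>) 0 * real m powi (int \<nu> - 1)
      + (\<Sum>i=0..p-\<nu>. real ((p - \<nu> + 1) choose i) * euler_poly i 0 * real m ^ (p - i)))"
      by (subst X_expand[OF assms(2,3) nu]) (rule refl)
  qed
  then show ?thesis
    by (simp add: sum.distrib sum_distrib_left algebra_simps)
qed

end
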